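(* Consider the contact process with infection rate $\lambda<1$ on the star graph $S_k$ with root $\rho$ and $k$ leaves. Let $M$ be a positive integer with $\frac{32}{\lambda}\le M\le\frac{\lambda k}{100}$. Assume that at least $M$ leaves are infected at time $t$. Then the probability that at least $\frac{\lambda k}{100}$ leaves are infected at time $t+1$ is at least $1-3\exp(-\lambda M/128)$.
   Context: The star graph $S_k$ consists of a root $\rho$ joined by an edge to each of $k$ leaves. The contact process with infection rate $\lambda$: each infected vertex recovers at rate $1$ and infects each neighbour independently at rate $\lambda$, all events independent. *)

theory Defs
  imports Complex_Main
begin

definition star_vertices :: "nat \<Rightarrow> nat set" where
  "star_vertices k = {0..k}"

definition star_leaves :: "nat \<Rightarrow> nat set" where
  "star_leaves k = {1..k}"

definition star_adj :: "nat \<Rightarrow> nat \<Rightarrow> nat \<Rightarrow> bool" where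
  "star_adj k u v \<longleftrightarrow> u \<in> star_vertices k \<and> v \<in> star_vertices k \<and>
      ((u = 0 \<and> v \<noteq> 0) \<or> (u \<noteq> 0 \<and> v = 0))"

definition cp_states :: "nat \<Rightarrow> nat set set" where
  "cp_states k = Pow (star_vertices k)"

text \<open>Off-diagonal jump rates: an infected vertex recovers at rate 1; a healthy vertex
  becomes infected at rate lambda times its number of infected neighbours.\<close>

definition cp_rate :: "nat \<Rightarrow> real \<Rightarrow> nat set \<Rightarrow> nat set \<Rightarrow> real" where
  "cp_rate k lam x y =
     (if \<exists>v\<in>x. y = x - {v} then 1
      else if \<exists>v\<in>star_vertices k - x. y = insert v x
        then lam * real (card {u\<in>x. star_adj k u (THE v. y = insert v x \<and> v \<notin> x)})
      else 0)"

definition cp_gen :: "nat \<Rightarrow> real \<Rightarrow> nat set \<Rightarrow> nat set \<Rightarrow> real" where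
  "cp_gen k lam x y =
     (if x = y then - (\<Sum>z\<in>cp_states k - {x}. cp_rate k lam x z) else cp_rate k lam x y)"

fun cp_gen_pow :: "nat \<Rightarrow> real \<Rightarrow> nat \<Rightarrow> nat set \<Rightarrow> nat set \<Rightarrow> real" where
  "cp_gen_pow k lam 0 x y = (if x = y then 1 else 0)"
| "cp_gen_pow k lam (Suc n) x y = (\<Sum>z\<in>cp_states k. cp_gen k lam x z * cp_gen_pow k lam n z y)"

definition cp_trans :: "nat \<Rightarrow> real \<Rightarrow> real \<Rightarrow> nat set \<Rightarrow> nat set \<Rightarrow> real" where
  "cp_trans k lam t x y = (\<Sum>n. t ^ n / fact n * cp_gen_pow k lam n x y)"

end

theory Submission
  imports Defs "HOL-Analysis.Complex_Transcendental"
begin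


lemma finite_states: "finite (cp_states k)"
  by (simp add: cp_states_def star_vertices_def)

lemma rate_nonneg: "lam \<ge> 0 \<Longrightarrow> cp_rate k lam x y \<ge> 0"
  by (simp add: cp_rate_def)

lemma gen_offdiag: "x \<noteq> y \<Longrightarrow> cp_gen k lam x y = cp_rate k lam x y"
  by (simp add: cp_gen_def)

lemma gen_rowsum:
  assumes "x \<in> cp_states k"
  shows "(\<Sum>y\<in>cp_states k. cp_gen k lam x y) = 0"
proof -
  have "(\<Sum>y\<in>cp_states k. cp_gen k lam x y) = cp_gen k lam x x + (\<Sum>y\<in>cp_states k - {x}. cp_gen k lam x y)"
    using assms finite_states by (simp add: sum.remove)
  also have "(\<Sum>y\<in>cp_states k - {x}. cp_gen k lam x y) = (\<Sum>y\<in>cp_states k - {x}. cp_rate k lam x y)"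
    by (rule sum.cong) (auto simp: cp_gen_def)
  finally show ?thesis by (simp add: cp_gen_def)
qed

lemma pow_rowsum:
  assumes "x \<in> cp_states k"
  shows "(\<Sum>y\<in>cp_states k. cp_gen_pow k lam n x y) = (if n = 0 then 1 else 0)"
  using assms
proof (induction n arbitrary: x)
  case 0
  then show ?case using finite_states by simp
next
  case (Suc n)
  have "(\<Sum>y\<in>cp_states k. cp_gen_pow k lam (Suc n) x y)
      = (\<Sum>z\<in>cp_states k. cp_gen k lam x z * (\<Sum>y\<in>cp_states k. cp_gen_pow k lam n z y))"
    by (simp add: sum_distrib_left) (rule sum.swap)
  also have "\<dots> = (\<Sum>z\<in>cp_states k. cp_gen k lam x z * (if n = 0 then 1 else 0))"
    by (rule sum.cong) (use Suc in auto)
  also have "\<dots> = 0"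
    using gen_rowsum[OF Suc.prems] by (simp flip: sum_distrib_right)
  finally show ?case by simp
qed

lemma ifmult1: "(if a then 1 else 0) * (b::real) = (if a then b else 0)" by simp
lemma ifmult2: "(b::real) * (if a then 1 else 0) = (if a then b else 0)" by simp

lemma pow_right:
  assumes "x \<in> cp_states k" "y \<in> cp_states k"
  shows "cp_gen_pow k lam (Suc n) x y = (\<Sum>z\<in>cp_states k. cp_gen_pow k lam n x z * cp_gen k lam z y)"
  using assms(1)
proof (induction n arbitrary: x)
  case 0
  then show ?case using finite_states assms(2)
    by (simp add: ifmult1 ifmult2 sum.delta sum.delta' del: mult_1 mult_1_right)
next
  case (Suc n)
  have "cp_gen_pow k lam (Suc (Suc n)) x y = (\<Sum>z\<in>cp_states k. cp_gen k lam x z * cp_gen_pow k lam (Suc n) z y)"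
    by simp
  also have "\<dots> = (\<Sum>z\<in>cp_states k. cp_gen k lam x z * (\<Sum>w\<in>cp_states k. cp_gen_pow k lam n z w * cp_gen k lam w y))"
    by (rule sum.cong) (use Suc in auto)
  also have "\<dots> = (\<Sum>w\<in>cp_states k. (\<Sum>z\<in>cp_states k. cp_gen k lam x z * cp_gen_pow k lam n z w) * cp_gen k lam w y)"
    by (simp add: sum_distrib_left sum_distrib_right mult.assoc) (rule sum.swap)
  finally show ?case by simp
qed

definition gbound :: "nat \<Rightarrow> real \<Rightarrow> real" where
  "gbound k lam = (\<Sum>x\<in>cp_states k. \<Sum>z\<in>cp_states k. \<bar>cp_gen k lam x z\<bar>)"

lemma pow_bound:
  assumes "x \<in> cp_states k"
  shows "\<bar>cp_gen_pow k lam n x y\<bar> \<le> gbound k lam ^ n"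
  using assms
proof (induction n arbitrary: x)
  case 0
  then show ?case by simp
next
  case (Suc n)
  have row: "(\<Sum>z\<in>cp_states k. \<bar>cp_gen k lam x z\<bar>) \<le> gbound k lam"
    unfolding gbound_def
    by (rule member_le_sum[of x "cp_states k" "\<lambda>x. \<Sum>z\<in>cp_states k. \<bar>cp_gen k lam x z\<bar>"])
       (use Suc.prems finite_states in \<open>auto intro: sum_nonneg\<close>)
  have "\<bar>cp_gen_pow k lam (Suc n) x y\<bar> \<le> (\<Sum>z\<in>cp_states k. \<bar>cp_gen k lam x z\<bar> * \<bar>cp_gen_pow k lam n z y\<bar>)"
    by (simp add: abs_mult[symmetric] sum_abs)
  also have "\<dots> \<le> (\<Sum>z\<in>cp_states k. \<bar>cp_gen k lam x z\<bar> * gbound k lam ^ n)"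
    by (rule sum_mono) (use Suc in \<open>auto intro: mult_left_mono\<close>)
  also have "\<dots> \<le> gbound k lam * gbound k lam ^ n"
  proof -
    have "gbound k lam \<ge> 0" unfolding gbound_def by (auto intro!: sum_nonneg)
    then show ?thesis using row by (simp add: sum_distrib_right[symmetric] mult_right_mono)
  qed
  finally show ?case by simp
qed



lemma trans_alt: "cp_trans k lam t x y = (\<Sum>n. (cp_gen_pow k lam n x y / fact n) * t ^ n)"
  unfolding cp_trans_def by (simp add: field_simps)

lemma summable_abs_pow:
  assumes "x \<in> cp_states k"
  shows "summable (\<lambda>n. \<bar>(cp_gen_pow k lam n x y / fact n) * t ^ n\<bar>)"
proof (rule summable_comparison_test'[where N=0])
  show "summable (\<lambda>n. inverse (fact n) * (gbound k lam * \<bar>t\<bar>) ^ n)"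
    by (rule summable_exp)
  fix n :: nat
  have "\<bar>cp_gen_pow k lam n x y\<bar> * \<bar>t\<bar> ^ n \<le> gbound k lam ^ n * \<bar>t\<bar> ^ n"
    using pow_bound[OF assms] by (intro mult_right_mono) auto
  then show "norm \<bar>(cp_gen_pow k lam n x y / fact n) * t ^ n\<bar> \<le> inverse (fact n) * (gbound k lam * \<bar>t\<bar>) ^ n"
    by (simp add: abs_mult power_abs power_mult_distrib divide_simps)
qed

lemma summable_pow:
  assumes "x \<in> cp_states k"
  shows "summable (\<lambda>n. (cp_gen_pow k lam n x y / fact n) * t ^ n)"
  using summable_rabs_cancel[OF summable_abs_pow[OF assms]] .

lemma trans0: "cp_trans k lam 0 x y = (if x = y then 1 else 0)"
  unfolding trans_alt by (subst powser_zero) simp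

lemma trans_rowsum:
  assumes "x \<in> cp_states k"
  shows "(\<Sum>y\<in>cp_states k. cp_trans k lam t x y) = 1"
proof -
  have "(\<Sum>y\<in>cp_states k. cp_trans k lam t x y)
      = (\<Sum>n. \<Sum>y\<in>cp_states k. (cp_gen_pow k lam n x y / fact n) * t ^ n)"
    unfolding trans_alt by (rule suminf_sum[symmetric]) (rule summable_pow[OF assms])
  also have "\<dots> = (\<Sum>n. (if n = 0 then 1 else 0))"
    by (rule suminf_cong) (simp add: sum_distrib_right[symmetric] sum_divide_distrib[symmetric] pow_rowsum[OF assms])
  also have "\<dots> = 1"
    using sums_single[of 0 "\<lambda>_. 1::real"] by (simp add: sums_iff)
  finally show ?thesis .
qed

lemma trans_deriv:
  assumes "x \<in> cp_states k" "y \<in> cp_states k"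
  shows "((\<lambda>t. cp_trans k lam t x y) has_real_derivative
           (\<Sum>z\<in>cp_states k. cp_trans k lam t x z * cp_gen k lam z y)) (at t)"
proof -
  let ?c = "\<lambda>n. cp_gen_pow k lam n x y / fact n"
  have d: "((\<lambda>t. \<Sum>n. ?c n * t ^ n) has_field_derivative (\<Sum>n. diffs ?c n * t ^ n)) (at t)"
    by (rule termdiffs_strong_converges_everywhere) (rule summable_pow[OF assms(1)])
  have dc: "diffs ?c n = cp_gen_pow k lam (Suc n) x y / fact n" for n
  proof -
    have "fact (Suc n) = (of_nat (Suc n) :: real) * fact n" by (rule fact_Suc)
    moreover have "(fact n :: real) > 0" by simp
    ultimately show ?thesis unfolding diffs_def
      by (simp del: cp_gen_pow.simps of_nat_Suc fact_Suc)
  qed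
  have "(\<Sum>n. diffs ?c n * t ^ n)
      = (\<Sum>n. \<Sum>z\<in>cp_states k. (cp_gen_pow k lam n x z / fact n * t ^ n) * cp_gen k lam z y)"
  proof (rule suminf_cong)
    fix n
    show "diffs ?c n * t ^ n = (\<Sum>z\<in>cp_states k. (cp_gen_pow k lam n x z / fact n * t ^ n) * cp_gen k lam z y)"
      unfolding dc pow_right[OF assms, of lam n]
      by (simp add: sum_distrib_right sum_divide_distrib del: cp_gen_pow.simps)
         (rule sum.cong, simp_all add: field_simps del: cp_gen_pow.simps)
  qed
  also have "\<dots> = (\<Sum>z\<in>cp_states k. \<Sum>n. (cp_gen_pow k lam n x z / fact n * t ^ n) * cp_gen k lam z y)"
    by (rule suminf_sum) (rule summable_mult2, rule summable_pow[OF assms(1)])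
  also have "\<dots> = (\<Sum>z\<in>cp_states k. cp_trans k lam t x z * cp_gen k lam z y)"
    unfolding trans_alt by (rule sum.cong[OF refl], rule suminf_mult2[symmetric], rule summable_pow[OF assms(1)])
  finally show ?thesis using d unfolding trans_alt[abs_def] by simp
qed



lemma binom_rec:
  fixes T :: "nat \<Rightarrow> real" and b :: real
  shows "(\<Sum>k\<le>n. of_nat (n choose k) * T (k+1) * b^(n-k)) + (\<Sum>k\<le>n. of_nat (n choose k) * T k * b^(n-k+1))
       = (\<Sum>k\<le>n+1. of_nat (n+1 choose k) * T k * b^(n+1-k))"
proof -
  have decomp: "{0..n+1} = {0} \<union> {n + 1} \<union> {1..n}" and decomp2: "{0..n} = {0} \<union> {1..n}"
    by auto
  have "(\<Sum>k\<le>n. of_nat (n choose k) * T (k+1) * b^(n-k)) + (\<Sum>k\<le>n. of_nat (n choose k) * T k * b^(n-k+1))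
     = (\<Sum>k\<le>n. of_nat (n choose k) * T k * b^(n + 1 - k)) +
      (\<Sum>k=1..n+1. of_nat (n choose (k - 1)) * T k * b^(n + 1 - k))"
    by (simp add: atMost_atLeast0 sum.shift_bounds_cl_Suc_ivl Suc_diff_le field_simps del: sum.cl_ivl_Suc)
  also have "\<dots> = b^(n + 1) * T 0 +
      (\<Sum>k=1..n. of_nat (n choose k) * T k * b^(n + 1 - k)) + (T (n + 1) +
      (\<Sum>k=1..n. of_nat (n choose (k - 1)) * T k * b^(n + 1 - k)))"
      using sum.nat_ivl_Suc' [of 1 n "\<lambda>k. of_nat (n choose (k-1)) * T k * b ^ (n + 1 - k)"]
    by (simp add: sum.atLeast_Suc_atMost atMost_atLeast0)
  also have "\<dots> = T (n + 1) + b^(n + 1) * T 0 +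
      (\<Sum>k=1..n. of_nat (n + 1 choose k) * T k * b^(n + 1 - k))"
    by (auto simp add: field_simps sum.distrib [symmetric] choose_reduce_nat)
  also have "\<dots> = (\<Sum>k\<le>n+1. of_nat (n + 1 choose k) * T k * b^(n + 1 - k))"
    using decomp by (simp add: atMost_atLeast0 field_simps)
  finally show ?thesis .
qed

fun bpow :: "nat \<Rightarrow> real \<Rightarrow> real \<Rightarrow> nat \<Rightarrow> nat set \<Rightarrow> nat set \<Rightarrow> real" where
  "bpow k lam a 0 x y = (if x = y then 1 else 0)"
| "bpow k lam a (Suc n) x y = (\<Sum>z\<in>cp_states k. (cp_gen k lam x z + (if x = z then a else 0)) * bpow k lam a n z y)"

lemma bpow_nonneg:
  assumes "lam \<ge> 0" "\<And>x. x \<in> cp_states k \<Longrightarrow> \<bar>cp_gen k lam x x\<bar> \<le> a"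
  shows "bpow k lam a n x y \<ge> 0"
proof (induction n arbitrary: x)
  case 0
  then show ?case by simp
next
  case (Suc n)
  have "cp_gen k lam x z + (if x = z then a else 0) \<ge> 0" if "z \<in> cp_states k" for z
  proof (cases "x = z")
    case True
    then show ?thesis using assms(2)[OF that] by auto
  next
    case False
    then show ?thesis using rate_nonneg[OF assms(1)] by (simp add: cp_gen_def)
  qed
  then show ?case using Suc by (simp add: sum_nonneg)
qed

lemma bpow_binom:
  assumes "x \<in> cp_states k"
  shows "bpow k lam a n x y = (\<Sum>j\<le>n. of_nat (n choose j) * cp_gen_pow k lam j x y * a ^ (n - j))"
  using assms
proof (induction n arbitrary: x)
  case 0
  then show ?case by simp
next
  case (Suc n)
  have "bpow k lam a (Suc n) x y = (\<Sum>z\<in>cp_states k. cp_gen k lam x z * bpow k lam a n z y)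
          + (\<Sum>z\<in>cp_states k. (if x = z then a else 0) * bpow k lam a n z y)"
    by (simp add: distrib_right sum.distrib del: bpow.simps(1))
  also have "(\<Sum>z\<in>cp_states k. (if x = z then a else 0) * bpow k lam a n z y) = a * bpow k lam a n x y"
    using Suc.prems finite_states by (simp add: if_distrib[where f="\<lambda>u. u * _"] sum.delta cong: if_cong)
  also have "(\<Sum>z\<in>cp_states k. cp_gen k lam x z * bpow k lam a n z y)
      = (\<Sum>z\<in>cp_states k. cp_gen k lam x z * (\<Sum>j\<le>n. of_nat (n choose j) * cp_gen_pow k lam j z y * a ^ (n - j)))"
    by (rule sum.cong) (use Suc in auto)
  also have "\<dots> = (\<Sum>j\<le>n. of_nat (n choose j) * cp_gen_pow k lam (j+1) x y * a ^ (n - j))"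
    by (simp add: sum_distrib_left sum_distrib_right mult_ac) (rule sum.swap)
  also have "a * bpow k lam a n x y = (\<Sum>j\<le>n. of_nat (n choose j) * cp_gen_pow k lam j x y * a ^ (n - j + 1))"
    using Suc by (simp add: sum_distrib_left mult_ac)
  finally show ?case
    using binom_rec[of n "\<lambda>j. cp_gen_pow k lam j x y" a] by simp
qed



lemma trans_nonneg:
  assumes lam: "lam \<ge> 0" and x: "x \<in> cp_states k" and t: "t \<ge> 0"
  shows "cp_trans k lam t x y \<ge> 0"
proof -
  define a where "a = (\<Sum>x\<in>cp_states k. \<bar>cp_gen k lam x x\<bar>)"
  have a_ge: "\<bar>cp_gen k lam z z\<bar> \<le> a" if "z \<in> cp_states k" for z
    unfolding a_def by (rule member_le_sum[of z "cp_states k" "\<lambda>x. \<bar>cp_gen k lam x x\<bar>"]) (use that finite_states in auto)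
  have a0: "a \<ge> 0" unfolding a_def by (auto intro: sum_nonneg)
  define u where "u i = cp_gen_pow k lam i x y / fact i * t ^ i" for i
  define v where "v m = inverse (fact m) * (a * t) ^ m" for m :: nat
  have su: "summable (\<lambda>i. norm (u i))" unfolding u_def real_norm_def by (rule summable_abs_pow[OF x])
  have sv: "summable (\<lambda>m. norm (v m))" unfolding v_def using a0 t by (simp add: summable_exp)
  have prod: "(\<Sum>i. u i) * (\<Sum>m. v m) = (\<Sum>n. \<Sum>i\<le>n. u i * v (n - i))"
    by (rule Cauchy_product[OF su sv])
  have inner: "(\<Sum>i\<le>n. u i * v (n - i)) = t ^ n / fact n * bpow k lam a n x y" for n
  proof -
    have "u i * v (n - i) = t ^ n / fact n * (of_nat (n choose i) * cp_gen_pow k lam i x y * a ^ (n - i))"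
      if "i \<le> n" for i
    proof -
      have tt: "t ^ i * t ^ (n - i) = t ^ n" using that by (simp add: power_add[symmetric])
      show ?thesis
        unfolding u_def v_def binomial_fact[OF that]
        by (simp add: power_mult_distrib field_simps tt[symmetric])
    qed
    then have "(\<Sum>i\<le>n. u i * v (n - i)) = (\<Sum>i\<le>n. t ^ n / fact n * (of_nat (n choose i) * cp_gen_pow k lam i x y * a ^ (n - i)))"
      by (intro sum.cong) auto
    also have "\<dots> = t ^ n / fact n * bpow k lam a n x y"
      by (simp add: bpow_binom[OF x] sum_distrib_left del: bpow.simps)
    finally show ?thesis .
  qed
  have "(\<Sum>n. \<Sum>i\<le>n. u i * v (n - i)) \<ge> 0"
  proof (rule suminf_nonneg)
    show "summable (\<lambda>n. \<Sum>i\<le>n. u i * v (n - i))" by (rule summable_Cauchy_product[OF su sv])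
    fix n show "0 \<le> (\<Sum>i\<le>n. u i * v (n - i))"
      unfolding inner using bpow_nonneg[OF lam a_ge] t by (simp del: bpow.simps)
  qed
  moreover have "(\<Sum>m. v m) = exp (a * t)"
    unfolding v_def using exp_converges[of "a*t"] by (simp add: sums_iff field_simps)
  ultimately have "(\<Sum>i. u i) * exp (a * t) \<ge> 0" using prod by simp
  then have "(\<Sum>i. u i) \<ge> 0" by (simp add: zero_le_mult_iff)
  then show ?thesis unfolding cp_trans_def u_def by (simp add: field_simps)
qed



lemma super_mono:
  assumes lam: "lam \<ge> 0" and A: "A \<in> cp_states k"
    and der: "\<And>y t. y \<in> cp_states k \<Longrightarrow> ((\<lambda>t. g t y) has_real_derivative g' t y) (at t)"
    and sup: "\<And>t z. 0 \<le> t \<Longrightarrow> t \<le> 1 \<Longrightarrow> z \<in> cp_states k \<Longrightarrow>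
                 g' t z + (\<Sum>y\<in>cp_states k. cp_gen k lam z y * g t y) \<le> 0"
  shows "(\<Sum>y\<in>cp_states k. cp_trans k lam 1 A y * g 1 y) \<le> g 0 A"
proof -
  define F where "F t = (\<Sum>y\<in>cp_states k. cp_trans k lam t A y * g t y)" for t
  have dF: "(F has_real_derivative
      (\<Sum>y\<in>cp_states k. (\<Sum>z\<in>cp_states k. cp_trans k lam t A z * cp_gen k lam z y) * g t y
          + g' t y * cp_trans k lam t A y)) (at t)" for t
    unfolding F_def[abs_def]
    by (rule DERIV_sum, rule DERIV_mult, rule trans_deriv[OF A], assumption, rule der, assumption)
  have eq: "(\<Sum>y\<in>cp_states k. (\<Sum>z\<in>cp_states k. cp_trans k lam t A z * cp_gen k lam z y) * g t y
          + g' t y * cp_trans k lam t A y)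
      = (\<Sum>z\<in>cp_states k. cp_trans k lam t A z * (g' t z + (\<Sum>y\<in>cp_states k. cp_gen k lam z y * g t y)))" for t
  proof -
    have "(\<Sum>y\<in>cp_states k. (\<Sum>z\<in>cp_states k. cp_trans k lam t A z * cp_gen k lam z y) * g t y)
        = (\<Sum>z\<in>cp_states k. cp_trans k lam t A z * (\<Sum>y\<in>cp_states k. cp_gen k lam z y * g t y))"
      by (simp add: sum_distrib_left sum_distrib_right mult_ac) (rule sum.swap)
    then show ?thesis
      by (simp add: sum.distrib distrib_left mult_ac)
  qed
  have "F 1 \<le> F 0"
  proof (rule DERIV_nonpos_imp_nonincreasing[of 0 1 F])
    fix t :: real assume t: "0 \<le> t" "t \<le> 1"
    have "(\<Sum>z\<in>cp_states k. cp_trans k lam t A z * (g' t z + (\<Sum>y\<in>cp_states k. cp_gen k lam z y * g t y))) \<le> 0"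
      by (rule sum_nonpos) (auto intro!: mult_nonneg_nonpos trans_nonneg[OF lam A] sup t)
    then show "\<exists>y. (F has_real_derivative y) (at t) \<and> y \<le> 0"
      using dF[of t] eq[of t] by auto
  qed simp
  moreover have "F 0 = g 0 A"
    unfolding F_def trans0 using A finite_states
    by (simp add: if_distrib[where f="\<lambda>u. u * _"] sum.delta cong: if_cong)
  ultimately show ?thesis unfolding F_def by simp
qed



lemma gen_apply:
  assumes z: "z \<in> cp_states k"
  shows "(\<Sum>y\<in>cp_states k. cp_gen k lam z y * f y) = (\<Sum>y\<in>cp_states k - {z}. cp_rate k lam z y * (f y - f z))"
proof -
  have "(\<Sum>y\<in>cp_states k. cp_gen k lam z y * f y) = cp_gen k lam z z * f z + (\<Sum>y\<in>cp_states k - {z}. cp_gen k lam z y * f y)"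
    using z finite_states by (simp add: sum.remove)
  also have "(\<Sum>y\<in>cp_states k - {z}. cp_gen k lam z y * f y) = (\<Sum>y\<in>cp_states k - {z}. cp_rate k lam z y * f y)"
    by (rule sum.cong) (auto simp: cp_gen_def)
  finally show ?thesis
    by (simp add: cp_gen_def right_diff_distrib sum_subtractf sum_distrib_right)
qed

lemma rate_remove:
  assumes "v \<in> z" shows "cp_rate k lam z (z - {v}) = 1"
  using assms unfolding cp_rate_def by auto

lemma rate_insert:
  assumes "v \<in> star_vertices k - z"
  shows "cp_rate k lam z (insert v z) = lam * real (card {u\<in>z. star_adj k u v})"
proof -
  have n1: "\<not> (\<exists>w\<in>z. insert v z = z - {w})" using assms by auto
  have th: "(THE w. insert v z = insert w z \<and> w \<notin> z) = v"
    by (rule the_equality) (use assms in auto)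
  show ?thesis unfolding cp_rate_def using n1 th assms by auto
qed

lemma gen_trans:
  assumes z: "z \<in> cp_states k"
  shows "(\<Sum>y\<in>cp_states k - {z}. cp_rate k lam z y * (f y - f z))
       = (\<Sum>v\<in>z. f (z - {v}) - f z)
         + (\<Sum>v\<in>star_vertices k - z. lam * real (card {u\<in>z. star_adj k u v}) * (f (insert v z) - f z))"
proof -
  define R where "R = (\<lambda>v. z - {v}) ` z"
  define I where "I = (\<lambda>v. insert v z) ` (star_vertices k - z)"
  have zV: "z \<subseteq> star_vertices k" using z by (simp add: cp_states_def)
  have finV: "finite (star_vertices k)" by (simp add: star_vertices_def)
  have finz: "finite z" using zV finV finite_subset by blast
  have RS: "R \<subseteq> cp_states k - {z}" unfolding R_def using zV by (auto simp: cp_states_def)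
  have IS: "I \<subseteq> cp_states k - {z}" unfolding I_def using zV by (auto simp: cp_states_def)
  have disj: "R \<inter> I = {}" unfolding R_def I_def by auto
  have "(\<Sum>y\<in>cp_states k - {z}. cp_rate k lam z y * (f y - f z)) = (\<Sum>y\<in>R \<union> I. cp_rate k lam z y * (f y - f z))"
  proof (rule sum.mono_neutral_right)
    show "finite (cp_states k - {z})" using finite_states by simp
    show "R \<union> I \<subseteq> cp_states k - {z}" using RS IS by simp
    show "\<forall>i\<in>cp_states k - {z} - (R \<union> I). cp_rate k lam z i * (f i - f z) = 0"
      unfolding R_def I_def cp_rate_def by auto
  qed
  also have "\<dots> = (\<Sum>y\<in>R. cp_rate k lam z y * (f y - f z)) + (\<Sum>y\<in>I. cp_rate k lam z y * (f y - f z))"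
    by (rule sum.union_disjoint) (use disj finite_subset[OF RS] finite_subset[OF IS] finite_states in auto)
  also have "(\<Sum>y\<in>R. cp_rate k lam z y * (f y - f z)) = (\<Sum>v\<in>z. f (z - {v}) - f z)"
  proof -
    have "inj_on (\<lambda>v. z - {v}) z" by (rule inj_onI) auto
    then show ?thesis unfolding R_def by (simp add: sum.reindex rate_remove)
  qed
  also have "(\<Sum>y\<in>I. cp_rate k lam z y * (f y - f z))
      = (\<Sum>v\<in>star_vertices k - z. lam * real (card {u\<in>z. star_adj k u v}) * (f (insert v z) - f z))"
  proof -
    have "inj_on (\<lambda>v. insert v z) (star_vertices k - z)" by (rule inj_onI) auto
    then show ?thesis unfolding I_def by (simp add: sum.reindex rate_insert)
  qed
  finally show ?thesis .
qed



lemma gen_F: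
  fixes F :: "bool \<Rightarrow> nat \<Rightarrow> real"
  assumes z: "z \<in> cp_states k"
  defines "n \<equiv> card (z \<inter> star_leaves k)"
  shows "(\<Sum>y\<in>cp_states k. cp_gen k lam z y * F (0 \<in> y) (card (y \<inter> star_leaves k)))
       = (if 0 \<in> z then F False n - F True n else 0) + real n * (F (0 \<in> z) (n - 1) - F (0 \<in> z) n)
         + (if 0 \<in> z then 0 else lam * real n * (F True n - F False n))
         + (if 0 \<in> z then lam * real (k - n) * (F True (n + 1) - F True n) else 0)"
proof -
  let ?L = "star_leaves k" and ?V = "star_vertices k"
  define f where "f y = F (0 \<in> y) (card (y \<inter> ?L))" for y
  have zV: "z \<subseteq> ?V" using z by (simp add: cp_states_def)
  have VL: "?V = {0} \<union> ?L" "0 \<notin> ?L" by (auto simp: star_vertices_def star_leaves_def)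
  have finL: "finite ?L" by (simp add: star_leaves_def)
  have finz: "finite z" using zV by (rule finite_subset) (simp add: star_vertices_def)
  have cardL: "card ?L = k" by (simp add: star_leaves_def)
  have nk: "n \<le> k" unfolding n_def using cardL finL by (metis card_mono inf_le2)
  have zsplit: "z = (z \<inter> {0}) \<union> (z \<inter> ?L)" using zV VL by auto
  have rem_leaf: "f (z - {v}) - f z = F (0 \<in> z) (n - 1) - F (0 \<in> z) n" if "v \<in> z \<inter> ?L" for v
  proof -
    have "v \<noteq> 0" using that VL(2) by (metis IntD2)
    then have "0 \<in> z - {v} \<longleftrightarrow> 0 \<in> z" by auto
    moreover have "(z - {v}) \<inter> ?L = (z \<inter> ?L) - {v}" by auto
    moreover have "card ((z \<inter> ?L) - {v}) = n - 1" using that finz unfolding n_def by simp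
    ultimately show ?thesis unfolding f_def by (simp add: n_def)
  qed
  have "(\<Sum>v\<in>z. f (z - {v}) - f z) = (\<Sum>v\<in>z \<inter> {0}. f (z - {v}) - f z) + (\<Sum>v\<in>z \<inter> ?L. f (z - {v}) - f z)"
    by (subst zsplit, rule sum.union_disjoint) (use finz VL in auto)
  also have "(\<Sum>v\<in>z \<inter> ?L. f (z - {v}) - f z) = real n * (F (0 \<in> z) (n - 1) - F (0 \<in> z) n)"
    using rem_leaf by (simp add: n_def)
  also have "(\<Sum>v\<in>z \<inter> {0}. f (z - {v}) - f z) = (if 0 \<in> z then F False n - F True n else 0)"
  proof (cases "0 \<in> z")
    case True
    then have "z \<inter> {0} = {0}" by auto
    moreover have "(z - {0}) \<inter> ?L = z \<inter> ?L" using VL by auto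
    ultimately show ?thesis using True unfolding f_def n_def by simp
  next
    case False
    then have "z \<inter> {0} = {}" by auto
    then show ?thesis using False by simp
  qed
  finally have remsum: "(\<Sum>v\<in>z. f (z - {v}) - f z) = (if 0 \<in> z then F False n - F True n else 0) + real n * (F (0 \<in> z) (n - 1) - F (0 \<in> z) n)" .
  have Vsplit: "?V - z = ({0} - z) \<union> (?L - z)" using VL by auto
  have inf_leaf: "lam * real (card {u\<in>z. star_adj k u v}) * (f (insert v z) - f z)
      = (if 0 \<in> z then lam * (F True (n + 1) - F True n) else 0)" if "v \<in> ?L - z" for v
  proof -
    have v0: "v \<noteq> 0" "v \<in> ?V" using that VL by (metis DiffD1, auto)
    have "{u\<in>z. star_adj k u v} = z \<inter> {0}" using v0 zV unfolding star_adj_def by auto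
    then have c: "card {u\<in>z. star_adj k u v} = (if 0 \<in> z then 1 else 0)" by auto
    have "0 \<in> insert v z \<longleftrightarrow> 0 \<in> z" using v0 by auto
    moreover have "insert v z \<inter> ?L = insert v (z \<inter> ?L)" using that by auto
    moreover have "card (insert v (z \<inter> ?L)) = n + 1" using that finz unfolding n_def by simp
    ultimately show ?thesis using c unfolding f_def by (simp add: n_def)
  qed
  have "(\<Sum>v\<in>?V - z. lam * real (card {u\<in>z. star_adj k u v}) * (f (insert v z) - f z))
     = (\<Sum>v\<in>{0} - z. lam * real (card {u\<in>z. star_adj k u v}) * (f (insert v z) - f z))
       + (\<Sum>v\<in>?L - z. lam * real (card {u\<in>z. star_adj k u v}) * (f (insert v z) - f z))"
    by (subst Vsplit, rule sum.union_disjoint) (use finL VL in auto)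
  also have "(\<Sum>v\<in>?L - z. lam * real (card {u\<in>z. star_adj k u v}) * (f (insert v z) - f z))
      = real (k - n) * (if 0 \<in> z then lam * (F True (n + 1) - F True n) else 0)"
  proof -
    have "card (?L - z) = k - n"
    proof -
      have "?L - z = ?L - (z \<inter> ?L)" by auto
      then show ?thesis using finL cardL unfolding n_def by (simp add: card_Diff_subset)
    qed
    then show ?thesis using inf_leaf by simp
  qed
  also have "(\<Sum>v\<in>{0} - z. lam * real (card {u\<in>z. star_adj k u v}) * (f (insert v z) - f z))
      = (if 0 \<in> z then 0 else lam * real n * (F True n - F False n))"
  proof (cases "0 \<in> z")
    case True
    then show ?thesis by simp
  next
    case False
    have "{u\<in>z. star_adj k u 0} = z \<inter> ?L" using zV VL False unfolding star_adj_def
      by (auto simp: star_vertices_def star_leaves_def)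
    moreover have "insert 0 z \<inter> ?L = z \<inter> ?L" using VL by auto
    moreover have "{0} - z = {0}" using False by auto
    ultimately show ?thesis using False unfolding f_def n_def by simp
  qed
  finally have infsum: "(\<Sum>v\<in>?V - z. lam * real (card {u\<in>z. star_adj k u v}) * (f (insert v z) - f z))
      = (if 0 \<in> z then 0 else lam * real n * (F True n - F False n))
        + real (k - n) * (if 0 \<in> z then lam * (F True (n + 1) - F True n) else 0)" .
  show ?thesis
    using gen_apply[OF z, of lam f] gen_trans[OF z, of lam f] remsum infsum
    unfolding f_def by simp
qed



lemma exp1_le: "exp (1::real) \<le> 272/100"
  using e_less_272 by simp

lemma exp3_le: "exp (3::real) \<le> 21"
proof -
  have "exp (3::real) = exp 1 ^ 3" by (simp add: exp_of_nat_mult[symmetric])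
  also have "\<dots> \<le> (272/100) ^ 3" by (rule power_mono[OF exp1_le]) simp
  also have "\<dots> \<le> 21" by (simp add: power3_eq_cube)
  finally show ?thesis .
qed

lemma exp_small_up:
  fixes s :: real assumes "0 \<le> s" "s \<le> 1/2" shows "exp s - 1 \<le> 2 * s"
proof -
  have a: "1 - s \<le> exp (-s)" using exp_ge_add_one_self[of "-s"] by simp
  have p: "1 - s > 0" using assms by simp
  have "exp s = 1 / exp (-s)" by (simp add: exp_minus field_simps)
  also have "\<dots> \<le> 1 / (1 - s)" using a p by (intro divide_left_mono) auto
  also have "\<dots> \<le> 1 + 2 * s"
  proof -
    have "s * (1 - 2 * s) \<ge> 0" using assms by simp
    then show ?thesis using p by (simp add: field_simps)
  qed
  finally show ?thesis by simp
qed

lemma one_minus_exp_low: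
  fixes s :: real assumes "0 \<le> s" "s \<le> 1" shows "s / 2 \<le> 1 - exp (-s)"
proof -
  have a: "1 + s \<le> exp s" by (rule exp_ge_add_one_self)
  have "exp (-s) = 1 / exp s" by (simp add: exp_minus field_simps)
  also have "\<dots> \<le> 1 / (1 + s)" using a assms by (intro divide_left_mono) auto
  also have "\<dots> \<le> 1 - s / 2"
  proof -
    have "s * (1 - s) \<ge> 0" using assms by simp
    then show ?thesis using assms by (simp add: field_simps)
  qed
  finally show ?thesis by simp
qed

lemma one_minus_exp_up:
  fixes s :: real shows "1 - exp (-s) \<le> s"
  using exp_ge_add_one_self[of "-s"] by simp



definition genE :: "nat \<Rightarrow> real \<Rightarrow> (bool \<Rightarrow> nat \<Rightarrow> real) \<Rightarrow> bool \<Rightarrow> nat \<Rightarrow> real" where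
  "genE k lam F r n = (if r then F False n - F True n else 0) + real n * (F r (n - 1) - F r n)
         + (if r then 0 else lam * real n * (F True n - F False n))
         + (if r then lam * real (k - n) * (F True (n + 1) - F True n) else 0)"

lemma genE_lin: "genE k lam (\<lambda>r n. F r n + K * G r n) r n = genE k lam F r n + K * genE k lam G r n"
  unfolding genE_def by (simp add: algebra_simps)

locale cpp =
  fixes k M :: nat and lam :: real
  assumes lam0: "0 < lam" and lam1: "lam < 1" and M1: "M \<ge> 1"
    and Mk: "real M \<le> lam * real k / 100" and big: "lam * real M \<ge> 128"
begin

definition "c = lam * real M / 16"
definition "s0 = 2 * (c + 1) / (lam * real k)"
definition "ss t = s0 * exp (3 * t)"
definition "phi1 = s0 * exp 3 * lam * real k / 100"
definition "phi t = phi1 - c * (1 - t)"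
definition "Hf t r n = (if r then 1 else 2) * exp (phi t - ss t * real n)"
definition "Gf t n = exp (- t) * (1 - exp t / 4) ^ n"
definition "q = M div 8"
definition "K = 2 * c * exp (phi1 + 1) * (10 / 3) ^ q"
definition "gF t r n = Hf t r n + K * Gf t n"
definition "Hd t r n = Hf t r n * (c - 3 * ss t * real n)"
definition "Gd t n = - Gf t n - exp (- t) * (real n * (1 - exp t / 4) ^ (n - 1) * (exp t / 4))"

lemma lamk: "lam * real k \<ge> 100 * real M" using Mk by simp
lemma kpos: "real k > 0"
proof (rule ccontr)
  assume "\<not> real k > 0"
  then have "k = 0" by simp
  then show False using lamk M1 by simp
qed

lemma c_pos: "c > 0" unfolding c_def using lam0 M1 by simp
lemma c_le: "c \<le> real M / 16" unfolding c_def using lam1 M1 by (simp add: mult_left_le_one_le)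
lemma s0_pos: "s0 > 0" unfolding s0_def using c_pos lam0 kpos by simp
lemma s0_key: "lam * real k * s0 = 2 * (c + 1)" unfolding s0_def using lam0 kpos by simp
lemma s0_small: "s0 \<le> 1 / 42"
proof -
  have "2 * (c + 1) * 42 \<le> 100 * real M" using c_le M1 by simp
  also have "\<dots> \<le> lam * real k" by (rule lamk)
  finally show ?thesis unfolding s0_def using lam0 kpos by (simp add: field_simps)
qed

lemma ss_bounds:
  assumes "0 \<le> t" "t \<le> 1"
  shows "s0 \<le> ss t" "ss t \<le> 1/2"
proof -
  have "exp (3 * t) \<ge> 1" using assms by simp
  then show "s0 \<le> ss t" unfolding ss_def using s0_pos by simp
  have "exp (3 * t) \<le> exp 3" using assms by simp
  also have "\<dots> \<le> 21" by (rule exp3_le)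
  finally have "ss t \<le> s0 * 21" unfolding ss_def using s0_pos by (intro mult_left_mono) auto
  then show "ss t \<le> 1/2" using s0_small by simp
qed

lemma phi1_eq: "phi1 = 2 * (c + 1) * exp 3 / 100"
proof -
  have "phi1 = (lam * real k * s0) * exp 3 / 100" unfolding phi1_def by (simp add: mult_ac)
  then show ?thesis unfolding s0_key .
qed

lemma phi_le: "t \<le> 1 \<Longrightarrow> phi t \<le> phi1"
  unfolding phi_def using c_pos by simp

end



context cpp
begin

lemma Hf_deriv: "((\<lambda>t. Hf t r n) has_real_derivative Hd t r n) (at t)"
proof -
  have "((\<lambda>t. phi t - ss t * real n) has_real_derivative (c - 3 * ss t * real n)) (at t)"
    unfolding phi_def ss_def
    by (auto intro!: derivative_eq_intros simp: algebra_simps)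
  then have "((\<lambda>t. exp (phi t - ss t * real n)) has_real_derivative exp (phi t - ss t * real n) * (c - 3 * ss t * real n)) (at t)"
    by (rule DERIV_fun_exp)
  then have "((\<lambda>t. (if r then 1 else 2) * exp (phi t - ss t * real n)) has_real_derivative (if r then 1 else 2) * (exp (phi t - ss t * real n) * (c - 3 * ss t * real n))) (at t)"
    by (rule DERIV_cmult)
  then show ?thesis unfolding Hf_def Hd_def by (simp add: mult.assoc)
qed

lemma Gf_deriv: "((\<lambda>t. Gf t n) has_real_derivative Gd t n) (at t)"
  unfolding Gf_def Gd_def
  by (auto intro!: derivative_eq_intros simp: algebra_simps)

lemma gF_deriv: "((\<lambda>t. gF t r n) has_real_derivative (Hd t r n + K * Gd t n)) (at t)"
  unfolding gF_def by (intro DERIV_add Hf_deriv DERIV_cmult Gf_deriv)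

lemma Hf_down: "real n * (Hf t r (n - 1) - Hf t r n) = real n * Hf t r n * (exp (ss t) - 1)"
proof (cases "n = 0")
  case True then show ?thesis by simp
next
  case False
  then have "real (n - 1) = real n - 1" by (simp add: of_nat_diff)
  then have eq: "phi t - ss t * real (n - 1) = (phi t - ss t * real n) + ss t" by (simp add: algebra_simps)
  have "exp (phi t - ss t * real (n - 1)) = exp (phi t - ss t * real n) * exp (ss t)"
    by (subst eq) (rule exp_add)
  then have "Hf t r (n - 1) = Hf t r n * exp (ss t)" unfolding Hf_def by simp
  then show ?thesis by (simp add: algebra_simps)
qed

lemma Hf_up: "Hf t r (n + 1) = Hf t r n * exp (- ss t)"
proof -
  have eq: "phi t - ss t * real (n + 1) = (phi t - ss t * real n) + - ss t" by (simp add: algebra_simps)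
  have "exp (phi t - ss t * real (n + 1)) = exp (phi t - ss t * real n) * exp (- ss t)"
    by (subst eq) (rule exp_add)
  then show ?thesis unfolding Hf_def by simp
qed

lemma H_part:
  assumes t: "0 \<le> t" "t \<le> 1" and nk: "n \<le> k"
  shows "Hd t r n + genE k lam (Hf t) r n \<le> (if \<not> r \<and> 8 * n < M then 2 * c * exp phi1 else 0)"
proof -
  define s where "s = ss t"
  define e where "e = exp (phi t - s * real n)"
  have e0: "e > 0" unfolding e_def by simp
  have HT: "Hf t True n = e" and HF: "Hf t False n = 2 * e" unfolding Hf_def e_def s_def by simp_all
  have s_lo: "s0 \<le> s" and s_hi: "s \<le> 1/2" using ss_bounds[OF t] unfolding s_def by auto
  have s0': "s \<ge> 0" using s_lo s0_pos by simp
  have xs: "exp s - 1 \<le> 2 * s" using exp_small_up[OF s0' s_hi] .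
  have ys: "1 - exp (- s) \<le> s" by (rule one_minus_exp_up)
  have ylo: "s / 2 \<le> 1 - exp (- s)" using one_minus_exp_low[of s] s0' s_hi by simp
  have y0: "0 \<le> 1 - exp (- s)" using s0' by simp
  have rn: "real n \<ge> 0" by simp
  have rkn: "real (k - n) = real k - real n" using nk by (simp add: of_nat_diff)
  have nx: "real n * (exp s - 1) \<le> real n * (2 * s)" using xs by (intro mult_left_mono) auto
  show ?thesis
  proof (cases r)
    case True
    have lhs: "Hd t r n + genE k lam (Hf t) r n
        = e * (c + 1 - 3 * s * real n + real n * (exp s - 1) + lam * (real k - real n) * (exp (- s) - 1))"
      using True unfolding genE_def Hd_def Hf_down Hf_up HT HF
      by (simp add: s_def[symmetric] rkn HT algebra_simps)
    have b1: "real n * (lam * (1 - exp (- s))) \<le> real n * s"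
    proof (rule mult_left_mono)
      have "lam * (1 - exp (- s)) \<le> 1 * (1 - exp (- s))" using lam1 y0 by (intro mult_right_mono) auto
      then show "lam * (1 - exp (- s)) \<le> s" using ys by simp
    qed simp
    have b2: "lam * real k * (s / 2) \<le> lam * real k * (1 - exp (- s))"
      using ylo lam0 kpos by (intro mult_left_mono) auto
    have b3: "lam * real k * s0 \<le> lam * real k * s"
      using s_lo lam0 kpos by (intro mult_left_mono) auto
    have "c + 1 - 3 * s * real n + real n * (exp s - 1) + lam * (real k - real n) * (exp (- s) - 1) \<le> 0"
      using nx b1 b2 b3 s0_key by (simp add: algebra_simps)
    then have "Hd t r n + genE k lam (Hf t) r n \<le> 0"
      unfolding lhs using e0 by (simp add: mult_nonneg_nonpos)
    then show ?thesis using True by simp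
  next
    case False
    have lhs: "Hd t r n + genE k lam (Hf t) r n
        = 2 * e * (c - 3 * s * real n + real n * (exp s - 1) - lam * real n / 2)"
      using False unfolding genE_def Hd_def Hf_down HT HF
      by (simp add: s_def[symmetric] HF HT algebra_simps)
    have sn: "s * real n \<ge> 0" using s0' by simp
    have B0: "c - 3 * s * real n + real n * (exp s - 1) - lam * real n / 2 \<le> c - lam * real n / 2"
      using nx sn by (simp add: algebra_simps)
    show ?thesis
    proof (cases "8 * n < M")
      case True
      have "lam * real n \<ge> 0" using lam0 by simp
      then have "c - 3 * s * real n + real n * (exp s - 1) - lam * real n / 2 \<le> c" using B0 by simp
      then have "Hd t r n + genE k lam (Hf t) r n \<le> 2 * e * c" unfolding lhs using e0 by simp
      also have "e \<le> exp phi1"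
      proof -
        have "phi t - s * real n \<le> phi1" using phi_le[OF t(2)] sn by simp
        then show ?thesis unfolding e_def by simp
      qed
      then have "2 * e * c \<le> 2 * c * exp phi1" using c_pos by simp
      finally show ?thesis using False True by simp
    next
      case F8: False
      have "real M \<le> 8 * real n" using F8 by simp
      then have "lam * real M \<le> lam * (8 * real n)" using lam0 by (intro mult_left_mono) auto
      then have "c \<le> lam * real n / 2" unfolding c_def by simp
      then have "c - 3 * s * real n + real n * (exp s - 1) - lam * real n / 2 \<le> 0" using B0 by simp
      then have "Hd t r n + genE k lam (Hf t) r n \<le> 0" unfolding lhs using e0 by (simp add: mult_nonneg_nonpos)
      then show ?thesis using F8 by simp
    qed
  qed
qed

end


context cpp
begin

lemma b_bounds:
  fixes t :: real
  assumes "0 \<le> t" "t \<le> 1"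
  shows "3/10 \<le> 1 - exp t / 4" "1 - exp t / 4 \<le> 1"
proof -
  have "exp t \<le> exp 1" using assms by simp
  then have "exp t \<le> 272/100" using exp1_le by linarith
  then show "3/10 \<le> 1 - exp t / 4" by simp
  show "1 - exp t / 4 \<le> 1" by simp
qed

lemma G_part:
  assumes t: "0 \<le> t" "t \<le> 1"
  shows "Gd t n + genE k lam (\<lambda>r m. Gf t m) r n \<le> - Gf t n"
proof -
  define b where "b = 1 - exp t / 4"
  have b0: "0 \<le> b" "b \<le> 1" using b_bounds[OF t] unfolding b_def by auto
  have down: "real n * (Gf t (n - 1) - Gf t n) = exp (- t) * (real n * b ^ (n - 1) * (exp t / 4))"
  proof (cases n)
    case 0 then show ?thesis by simp
  next
    case (Suc m)
    have "Gf t (n - 1) - Gf t n = exp (- t) * (b ^ m * (1 - b))"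
      unfolding Gf_def b_def[symmetric] Suc by (simp add: algebra_simps)
    then show ?thesis unfolding b_def Suc by simp
  qed
  have up: "Gf t (n + 1) - Gf t n \<le> 0"
  proof -
    have "b ^ (n + 1) \<le> b ^ n" using b0 by (simp add: mult_left_le_one_le)
    then show ?thesis unfolding Gf_def b_def[symmetric] by (simp add: mult_left_mono)
  qed
  have inf: "(if r then lam * real (k - n) * (Gf t (n + 1) - Gf t n) else 0) \<le> 0"
    using up lam0 by (auto intro!: mult_nonneg_nonpos)
  have "Gd t n + genE k lam (\<lambda>r m. Gf t m) r n
      = - Gf t n + (if r then lam * real (k - n) * (Gf t (n + 1) - Gf t n) else 0)"
    unfolding genE_def Gd_def down b_def by simp
  then show ?thesis using inf by simp
qed

lemma Gf_nonneg: "0 \<le> (t::real) \<Longrightarrow> t \<le> 1 \<Longrightarrow> Gf t n \<ge> 0"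
  unfolding Gf_def using b_bounds[of t] by simp

lemma K_G_lower:
  assumes t: "0 \<le> t" "t \<le> 1" and n: "8 * n < M"
  shows "2 * c * exp phi1 \<le> K * Gf t n"
proof -
  have nq: "n \<le> q" unfolding q_def using n by linarith
  have "(3/10::real) ^ q \<le> (3/10) ^ n" using nq by (rule power_decreasing) auto
  also have "(3/10::real) ^ n \<le> (1 - exp t / 4) ^ n" using b_bounds[OF t] by (intro power_mono) auto
  finally have p: "(3/10::real) ^ q \<le> (1 - exp t / 4) ^ n" .
  have ee: "exp (-1) \<le> exp (- t)" using t by simp
  have "exp (-1) * (3/10::real) ^ q \<le> exp (- t) * (1 - exp t / 4) ^ n"
    using p ee by (intro mult_mono) auto
  then have "exp (-1) * (3/10::real) ^ q \<le> Gf t n" unfolding Gf_def .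
  then have "K * (exp (-1) * (3/10::real) ^ q) \<le> K * Gf t n"
    unfolding K_def using c_pos by (intro mult_left_mono) auto
  moreover have "K * (exp (-1) * (3/10::real) ^ q) = 2 * c * exp phi1"
  proof -
    have "(10/3::real) ^ q * (3/10) ^ q = 1" by (simp flip: power_mult_distrib)
    moreover have "exp (phi1 + 1) * exp (-1) = exp phi1" by (simp flip: exp_add)
    ultimately show ?thesis unfolding K_def by (simp add: algebra_simps)
  qed
  ultimately show ?thesis by simp
qed

end


context cpp
begin

lemma Hf_ge: "Hf t r n \<ge> exp (phi t - ss t * real n)"
  by (cases r) (simp_all add: Hf_def)
lemma Hf_le: "Hf t r n \<le> 2 * exp (phi t - ss t * real n)"
  by (cases r) (simp_all add: Hf_def)

lemma K_nonneg: "K \<ge> 0" unfolding K_def using c_pos by simp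

lemma super:
  assumes t: "0 \<le> t" "t \<le> 1" and z: "z \<in> cp_states k"
  shows "(Hd t (0 \<in> z) (card (z \<inter> star_leaves k)) + K * Gd t (card (z \<inter> star_leaves k)))
     + (\<Sum>y\<in>cp_states k. cp_gen k lam z y * gF t (0 \<in> y) (card (y \<inter> star_leaves k))) \<le> 0"
proof -
  define r where "r = (0 \<in> z)"
  define n where "n = card (z \<inter> star_leaves k)"
  have nk: "n \<le> k"
  proof -
    have "n \<le> card (star_leaves k)" unfolding n_def by (rule card_mono) (auto simp: star_leaves_def)
    then show ?thesis by (simp add: star_leaves_def)
  qed
  have sum: "(\<Sum>y\<in>cp_states k. cp_gen k lam z y * gF t (0 \<in> y) (card (y \<inter> star_leaves k)))
      = genE k lam (gF t) r n"
    unfolding genE_def r_def n_def by (rule gen_F[OF z])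
  have lin: "genE k lam (gF t) r n = genE k lam (Hf t) r n + K * genE k lam (\<lambda>r m. Gf t m) r n"
    unfolding gF_def[abs_def] by (rule genE_lin)
  have h: "Hd t r n + genE k lam (Hf t) r n \<le> (if \<not> r \<and> 8 * n < M then 2 * c * exp phi1 else 0)"
    by (rule H_part[OF t nk])
  have g: "K * (Gd t n + genE k lam (\<lambda>r m. Gf t m) r n) \<le> K * (- Gf t n)"
    using G_part[OF t, of n r] K_nonneg by (intro mult_left_mono) auto
  have "(if \<not> r \<and> 8 * n < M then 2 * c * exp phi1 else 0) \<le> K * Gf t n"
    using K_G_lower[OF t] K_nonneg Gf_nonneg[OF t] by auto
  then show ?thesis
    using h g unfolding sum lin r_def[symmetric] n_def[symmetric] by (simp add: algebra_simps)
qed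

lemma gF_nonneg: "0 \<le> t \<Longrightarrow> t \<le> 1 \<Longrightarrow> gF t r n \<ge> 0"
  unfolding gF_def Hf_def using K_nonneg Gf_nonneg[of t n] by simp

lemma gF_bad:
  assumes "real n < lam * real k / 100"
  shows "gF 1 r n \<ge> 1"
proof -
  have "phi 1 - ss 1 * real n = s0 * exp 3 * (lam * real k / 100 - real n)"
    unfolding phi_def ss_def phi1_def by (simp add: algebra_simps)
  also have "\<dots> \<ge> 0" using assms s0_pos by simp
  finally have "exp (phi 1 - ss 1 * real n) \<ge> 1" by simp
  then have "Hf 1 r n \<ge> 1" using Hf_ge[where t=1 and r=r and n=n] by linarith
  moreover have "K * Gf 1 n \<ge> 0" using K_nonneg Gf_nonneg[of 1 n] by simp
  ultimately show ?thesis unfolding gF_def by simp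
qed

lemma Lam_le_M: "lam * real M \<le> real M" using lam1 lam0 by (intro mult_left_le_one_le) auto

lemma c16: "16 * c = lam * real M" unfolding c_def by simp
lemma c_le': "16 * c \<le> real M" using c16 Lam_le_M by simp
lemma neg_eq: "- lam * real M / 128 = - (lam * real M) / 128" by simp

lemma phi1_le: "100 * phi1 \<le> 42 * c + 42"
proof -
  have h: "(c + 1) * exp 3 \<le> (c + 1) * 21" using exp3_le c_pos by (intro mult_left_mono) auto
  have e: "100 * phi1 = 2 * ((c + 1) * exp 3)" unfolding phi1_eq by (simp add: mult_ac)
  have "100 * phi1 \<le> 2 * ((c + 1) * 21)" unfolding e using h by simp
  also have "\<dots> = 42 * c + 42" by simp
  finally show ?thesis .
qed

lemma H0_bound:
  assumes "n0 \<ge> M"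
  shows "Hf 0 r n0 \<le> exp (- lam * real M / 128)"
proof -
  have "Hf 0 r n0 \<le> 2 * exp (phi 0)"
  proof -
    have "exp (phi 0 - ss 0 * real n0) \<le> exp (phi 0)" using s0_pos unfolding ss_def by simp
    then show ?thesis using Hf_le[where t=0 and r=r and n=n0] by linarith
  qed
  also have "2 * exp (phi 0) \<le> exp 1 * exp (phi 0)"
    using exp_ge_add_one_self[of 1] by (intro mult_right_mono) auto
  also have "\<dots> = exp (phi1 - c + 1)" unfolding phi_def by (simp flip: exp_add)
  also have "\<dots> \<le> exp (- lam * real M / 128)"
  proof -
    have "phi1 - c + 1 \<le> - (lam * real M) / 128" using phi1_le big c16 by linarith
    then show ?thesis unfolding neg_eq by simp
  qed
  finally show ?thesis .
qed

lemma KG0_bound: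
  assumes "n0 \<ge> M"
  shows "K * Gf (0::real) n0 \<le> 2 * exp (- lam * real M / 128)"
proof -
  have q8: "8 * q \<le> n0" unfolding q_def using assms by linarith
  have q8': "real M \<le> 8 * real q + 7"
  proof -
    have "M = 8 * q + M mod 8" unfolding q_def by simp
    moreover have "M mod 8 < 8" by simp
    ultimately have "M \<le> 8 * q + 7" by linarith
    then show ?thesis by linarith
  qed
  have "Gf (0::real) n0 = (3/4) ^ n0" unfolding Gf_def by simp
  also have "\<dots> \<le> (3/4) ^ (8 * q)" using q8 by (rule power_decreasing) auto
  finally have G: "Gf (0::real) n0 \<le> ((3/4::real) ^ 8) ^ q" by (simp add: power_mult)
  have base: "(10/3::real) * (3/4) ^ 8 \<le> exp (-1)"
  proof -
    have "exp (-1::real) = 1 / exp 1" by (simp add: exp_minus field_simps)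
    also have "\<dots> \<ge> 1 / (272/100)" using exp1_le by (intro divide_left_mono) auto
    finally have "100/272 \<le> exp (-1::real)" by simp
    moreover have "(10/3::real) * (3/4) ^ 8 \<le> 100/272" by (simp add: power_divide)
    ultimately show ?thesis by linarith
  qed
  have "K * Gf 0 n0 \<le> K * ((3/4) ^ 8) ^ q" using G K_nonneg by (intro mult_left_mono) auto
  also have "\<dots> = 2 * c * exp (phi1 + 1) * ((10/3) * (3/4) ^ 8) ^ q"
    unfolding K_def by (simp only: power_mult_distrib mult_ac)
  also have "\<dots> \<le> 2 * c * exp (phi1 + 1) * exp (-1) ^ q"
    using base c_pos by (intro mult_left_mono power_mono) auto
  also have "\<dots> = 2 * (c * exp (phi1 + 1 - real q))"
    by (simp add: exp_of_nat_mult[symmetric] exp_diff exp_minus field_simps)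
  also have "\<dots> \<le> 2 * exp (- lam * real M / 128)"
  proof -
    define X where "X = phi1 + 1 - real q + lam * real M / 128"
    have X: "X \<le> - (9 / 100) * real M + 23 / 10"
      unfolding X_def using phi1_le c_le' q8' Lam_le_M of_nat_0_le_iff[of M, where ?'a=real] by linarith
    have "1 - X \<le> exp (- X)" using exp_ge_add_one_self[of "-X"] by simp
    moreover have "c \<le> 1 - X" using X c_le' big Lam_le_M by linarith
    ultimately have "c \<le> exp (- X)" by simp
    then have "c * exp X \<le> 1" by (simp add: exp_minus field_simps)
    have eX: "exp X = exp (phi1 + 1 - real q) * exp (lam * real M / 128)"
      unfolding X_def by (rule exp_add)
    have "c * exp (phi1 + 1 - real q) = (c * exp X) * exp (- (lam * real M / 128))"
      unfolding eX by (simp add: exp_minus field_simps)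
    also have "\<dots> \<le> 1 * exp (- (lam * real M / 128))"
      using \<open>c * exp X \<le> 1\<close> by (intro mult_right_mono) auto
    finally have "c * exp (phi1 + 1 - real q) \<le> exp (- lam * real M / 128)"
      unfolding neg_eq by simp
    then show ?thesis by simp
  qed
  finally show ?thesis .
qed

end


theorem lemma3p3:
  fixes k M :: nat and lam :: real and A :: "nat set"
  assumes "0 < lam" and "lam < 1"
    and "M \<ge> 1"
    and "32 / lam \<le> real M" and "real M \<le> lam * real k / 100"
    and "A \<in> cp_states k"
    and "card (A \<inter> star_leaves k) \<ge> M"
  shows "(\<Sum>y\<in>{y\<in>cp_states k. real (card (y \<inter> star_leaves k)) \<ge> lam * real k / 100}.
            cp_trans k lam 1 A y) \<ge> 1 - 3 * exp (- lam * real M / 128)"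
proof -
  let ?S = "cp_states k"
  let ?good = "{y\<in>cp_states k. real (card (y \<inter> star_leaves k)) \<ge> lam * real k / 100}"
  let ?bad = "?S - ?good"
  have lamnn: "lam \<ge> 0" using assms(1) by simp
  have A: "A \<in> ?S" by fact
  have Pnn: "\<And>y. cp_trans k lam 1 A y \<ge> 0" using trans_nonneg[OF lamnn A] by simp
  show ?thesis
  proof (cases "3 * exp (- lam * real M / 128) \<ge> 1")
    case True
    have "(\<Sum>y\<in>?good. cp_trans k lam 1 A y) \<ge> 0" by (rule sum_nonneg) (use Pnn in auto)
    then show ?thesis using True by linarith
  next
    case False
    have big: "lam * real M \<ge> 128"
    proof (rule ccontr)
      assume "\<not> lam * real M \<ge> 128"
      then have "- lam * real M / 128 \<ge> -1" by simp
      then have "exp (- lam * real M / 128) \<ge> exp (-1)" by simp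
      moreover have "exp (-1::real) \<ge> 1/3"
      proof -
        have "exp (-1::real) = 1 / exp 1" by (simp add: exp_minus field_simps)
        also have "\<dots> \<ge> 1 / 3" using exp_le by (intro divide_left_mono) auto
        finally show ?thesis .
      qed
      ultimately show False using False by linarith
    qed
    interpret cpp k M lam
      by unfold_locales (use assms big in auto)
    define g where "g t y = gF t (0 \<in> y) (card (y \<inter> star_leaves k))" for t y
    define g' where "g' t y = Hd t (0 \<in> y) (card (y \<inter> star_leaves k)) + K * Gd t (card (y \<inter> star_leaves k))" for t y
    have main: "(\<Sum>y\<in>?S. cp_trans k lam 1 A y * g 1 y) \<le> g 0 A"
    proof (rule super_mono[OF lamnn A])
      fix y and t :: real show "((\<lambda>t. g t y) has_real_derivative g' t y) (at t)"
        unfolding g_def g'_def by (rule gF_deriv)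
    next
      fix t :: real and z assume "0 \<le> t" "t \<le> 1" "z \<in> ?S"
      then show "g' t z + (\<Sum>y\<in>?S. cp_gen k lam z y * g t y) \<le> 0"
        unfolding g_def g'_def by (rule super)
    qed
    have g0: "g 0 A \<le> 3 * exp (- lam * real M / 128)"
    proof -
      have "g 0 A = Hf 0 (0 \<in> A) (card (A \<inter> star_leaves k)) + K * Gf (0::real) (card (A \<inter> star_leaves k))"
        unfolding g_def gF_def by simp
      also have "\<dots> \<le> exp (- lam * real M / 128) + 2 * exp (- lam * real M / 128)"
        using H0_bound[OF assms(7)] KG0_bound[OF assms(7)] by (rule add_mono)
      finally show ?thesis by simp
    qed
    have fin: "finite ?S" by (rule finite_states)
    have split: "(\<Sum>y\<in>?S. cp_trans k lam 1 A y) = (\<Sum>y\<in>?good. cp_trans k lam 1 A y) + (\<Sum>y\<in>?bad. cp_trans k lam 1 A y)"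
      using fin by (subst sum.subset_diff[of ?good ?S]) auto
    have bad_le: "(\<Sum>y\<in>?bad. cp_trans k lam 1 A y) \<le> (\<Sum>y\<in>?S. cp_trans k lam 1 A y * g 1 y)"
    proof -
      have "(\<Sum>y\<in>?bad. cp_trans k lam 1 A y) \<le> (\<Sum>y\<in>?bad. cp_trans k lam 1 A y * g 1 y)"
      proof (rule sum_mono)
        fix y assume "y \<in> ?bad"
        then have "real (card (y \<inter> star_leaves k)) < lam * real k / 100" by auto
        then have "g 1 y \<ge> 1" unfolding g_def by (rule gF_bad)
        then show "cp_trans k lam 1 A y \<le> cp_trans k lam 1 A y * g 1 y"
          using Pnn[of y] by (simp add: mult_le_cancel_left1)
      qed
      also have "\<dots> \<le> (\<Sum>y\<in>?S. cp_trans k lam 1 A y * g 1 y)"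
      proof (rule sum_mono2[OF fin])
        show "?bad \<subseteq> ?S" by auto
        fix y assume "y \<in> ?S - ?bad"
        show "0 \<le> cp_trans k lam 1 A y * g 1 y"
          using Pnn[of y] gF_nonneg[of 1] unfolding g_def by simp
      qed
      finally show ?thesis .
    qed
    have "(\<Sum>y\<in>?S. cp_trans k lam 1 A y) = 1" by (rule trans_rowsum[OF A])
    then show ?thesis using split bad_le main g0 by linarith
  qed
qed


end
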